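(* Let $p\ge 2$ and $\epsilon>0$. There exists an in-tree task graph $T$ in the Pebble Game model such that every schedule $S$ of $T$ on $p$ processors with makespan $C_{\max}(S)=C^*_p(T)$ has peak memory $M(S)> (p-1-\epsilon)\,M^*_p(T)$. Consequently, no algorithm that is optimal for makespan minimization is a $(p-1-\epsilon)$-approximation for peak memory minimization.
   Context: Model. An in-tree task graph $T$ has nodes $\{1,\dots,n\}$ and a root; every non-root node $i$ has a parent, and $\mathrm{Children}(i)$ is the set of children of $i$. Each node $i$ has a processing time $w_i\ge 0$, an execution-file size $n_i\ge 0$ and an output-file size $f_i\ge 0$. A schedule on $p$ identical processors assigns each node $i$ a processor and a start time $\sigma_i\ge 0$; node $i$ runs without preemption during $[\sigma_i,\sigma_i+w_i)$, a processor runs at most one node at a time, and a node may start only after all its children have completed. The makespan is $C_{\max}=\max_i(\sigma_i+w_i)$. Memory: the output file of $i$ (size $f_i$) occupies memory from the start of $i$ until the completion of the parent of $i$ (for the root, until the end of the schedule), and the execution file of $i$ occupies memory while $i$ runs. The memory used at time $t$ is the total size of files present at time $t$; the peak memory $M(S)$ is the supremum over $t$ of the memory used. $C^*_p(T)$ denotes the minimum makespan and $M^*_p(T)$ the minimum peak memory over all schedules of $T$ on $p$ processors. The Pebble Game model is the special case $f_i=1$, $w_i=1$, $n_i=0$ for all $i$. *)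

theory Defs
  imports Complex_Main
begin

definition in_tree :: "nat \<Rightarrow> nat \<Rightarrow> (nat \<Rightarrow> nat) \<Rightarrow> bool" where
  "in_tree n r par \<longleftrightarrow> r \<in> {1..n}
     \<and> (\<forall>i\<in>{1..n}. i \<noteq> r \<longrightarrow> par i \<in> {1..n})
     \<and> (\<forall>i\<in>{1..n}. \<exists>k. (par ^^ k) i = r)"

definition children :: "nat \<Rightarrow> nat \<Rightarrow> (nat \<Rightarrow> nat) \<Rightarrow> nat \<Rightarrow> nat set" where
  "children n r par i = {j \<in> {1..n}. j \<noteq> r \<and> par j = i}"

definition valid_schedule ::
  "nat \<Rightarrow> nat \<Rightarrow> (nat \<Rightarrow> nat) \<Rightarrow> (nat \<Rightarrow> real) \<Rightarrow> nat \<Rightarrow> (nat \<Rightarrow> nat) \<Rightarrow> (nat \<Rightarrow> real) \<Rightarrow> bool" where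
  "valid_schedule n r par w p proc \<sigma> \<longleftrightarrow>
     (\<forall>i\<in>{1..n}. proc i < p \<and> 0 \<le> \<sigma> i)
     \<and> (\<forall>i\<in>{1..n}. \<forall>j\<in>{1..n}. i \<noteq> j \<and> proc i = proc j \<longrightarrow>
           {\<sigma> i..<\<sigma> i + w i} \<inter> {\<sigma> j..<\<sigma> j + w j} = {})
     \<and> (\<forall>i\<in>{1..n}. \<forall>j\<in>children n r par i. \<sigma> j + w j \<le> \<sigma> i)"

definition makespan :: "nat \<Rightarrow> (nat \<Rightarrow> real) \<Rightarrow> (nat \<Rightarrow> real) \<Rightarrow> real" where
  "makespan n w \<sigma> = Max ((\<lambda>i. \<sigma> i + w i) ` {1..n})"

text \<open>Memory used at time t: output file of i present on [sigma i, completion of parent)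
  (root: until the end of the schedule), execution file present while i runs.\<close>
definition mem_used ::
  "nat \<Rightarrow> nat \<Rightarrow> (nat \<Rightarrow> nat) \<Rightarrow> (nat \<Rightarrow> real) \<Rightarrow> (nat \<Rightarrow> real) \<Rightarrow> (nat \<Rightarrow> real)
    \<Rightarrow> (nat \<Rightarrow> real) \<Rightarrow> real \<Rightarrow> real" where
  "mem_used n r par w nx f \<sigma> t =
     (\<Sum>i\<in>{1..n}.
        (if \<sigma> i \<le> t \<and> t < (if i = r then makespan n w \<sigma> else \<sigma> (par i) + w (par i))
         then f i else 0)
      + (if \<sigma> i \<le> t \<and> t < \<sigma> i + w i then nx i else 0))"

definition peak_memory ::
  "nat \<Rightarrow> nat \<Rightarrow> (nat \<Rightarrow> nat) \<Rightarrow> (nat \<Rightarrow> real) \<Rightarrow> (nat \<Rightarrow> real) \<Rightarrow> (nat \<Rightarrow> real)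
    \<Rightarrow> (nat \<Rightarrow> real) \<Rightarrow> real" where
  "peak_memory n r par w nx f \<sigma> = Sup (range (mem_used n r par w nx f \<sigma>))"

definition opt_makespan ::
  "nat \<Rightarrow> nat \<Rightarrow> (nat \<Rightarrow> nat) \<Rightarrow> (nat \<Rightarrow> real) \<Rightarrow> nat \<Rightarrow> real" where
  "opt_makespan n r par w p =
     Inf {makespan n w \<sigma> | proc \<sigma>. valid_schedule n r par w p proc \<sigma>}"

definition opt_peak ::
  "nat \<Rightarrow> nat \<Rightarrow> (nat \<Rightarrow> nat) \<Rightarrow> (nat \<Rightarrow> real) \<Rightarrow> (nat \<Rightarrow> real) \<Rightarrow> (nat \<Rightarrow> real)
    \<Rightarrow> nat \<Rightarrow> real" where
  "opt_peak n r par w nx f p =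
     Inf {peak_memory n r par w nx f \<sigma> | proc \<sigma>. valid_schedule n r par w p proc \<sigma>}"

definition pebble_w :: "nat \<Rightarrow> real" where "pebble_w = (\<lambda>_. 1)"
definition pebble_nx :: "nat \<Rightarrow> real" where "pebble_nx = (\<lambda>_. 0)"
definition pebble_f :: "nat \<Rightarrow> real" where "pebble_f = (\<lambda>_. 1)"

end

theory Submission
  imports Defs
begin

definition NN :: "nat \<Rightarrow> nat \<Rightarrow> nat" where "NN p K = p*K+1"
definition nn :: "nat \<Rightarrow> nat \<Rightarrow> nat" where "nn p K = (p-1)*NN p K + 1"
definition tpar :: "nat \<Rightarrow> nat \<Rightarrow> nat \<Rightarrow> nat" where
  "tpar p K i = (if (i-1) mod NN p K < K then ((i-1) div NN p K)*NN p K + NN p K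
     else if (i-1) mod NN p K < NN p K - 1 then i+1 else nn p K)"

lemma dm: "(a::nat) < N \<Longrightarrow> (b*N+a) div N = b \<and> (b*N+a) mod N = a"
  by simp

lemma decomp:
  assumes "i \<in> {1..nn p K}" "i \<noteq> nn p K"
  shows "\<exists>b a. b < p-1 \<and> a < NN p K \<and> i = b*NN p K + a + 1"
proof -
  have N0: "NN p K > 0" by (simp add: NN_def)
  define b where "b = (i-1) div NN p K"
  define a where "a = (i-1) mod NN p K"
  have "i - 1 = b * NN p K + a" unfolding a_def b_def by (metis div_mult_mod_eq)
  moreover have "a < NN p K" unfolding a_def using N0 by simp
  moreover have "i - 1 < (p-1) * NN p K" using assms unfolding nn_def by auto
  hence "b < p - 1" unfolding b_def by (simp add: div_less_iff_less_mult N0)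
  ultimately show ?thesis using assms(1) by (intro exI[of _ b] exI[of _ a]) auto
qed

lemma tpar_eq:
  assumes "a < NN p K"
  shows "tpar p K (b*NN p K + a + 1) = (if a < K then b*NN p K + NN p K
     else if a < NN p K - 1 then b*NN p K + a + 2 else nn p K)"
  using assms by (simp add: tpar_def)

lemma mem_card:
  "mem_used n r par pebble_w pebble_nx pebble_f \<sigma> t = real (card {i\<in>{1..n}. \<sigma> i \<le> t \<and> t < (if i = r then makespan n pebble_w \<sigma> else \<sigma> (par i) + 1)})"
proof -
  have h: "\<And>A P. finite A \<Longrightarrow> (\<Sum>i\<in>A. (if P i then 1 else 0 :: real)) = real (card {i\<in>A. P i})"
    by (simp add: sum.inter_filter[symmetric])
  show ?thesis
  unfolding mem_used_def pebble_w_def pebble_nx_def pebble_f_def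
  by (simp add: h)
qed

lemma tpar_gt:
  assumes "i \<in> {1..nn p K}" "i \<noteq> nn p K"
  shows "i < tpar p K i \<and> tpar p K i \<le> nn p K"
proof -
  obtain b a where ba: "b < p-1" "a < NN p K" "i = b*NN p K + a + 1"
    using decomp[OF assms] by blast
  have bN: "b*NN p K + NN p K \<le> (p-1)*NN p K"
    proof -
    have "Suc b \<le> p - 1" using ba(1) by simp
    hence "Suc b * NN p K \<le> (p-1)*NN p K" by (rule mult_le_mono1)
    thus ?thesis by simp
  qed
  have KN: "K < NN p K" proof -
    have "1 \<le> p" using ba(1) by simp
    hence "1*K \<le> p*K" by (rule mult_le_mono1)
    thus ?thesis unfolding NN_def by linarith
  qed
  show ?thesis using ba bN KN unfolding tpar_eq[OF ba(2)] ba(3)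
    by (auto simp: nn_def)
qed

lemma tree_ok:
  assumes "p \<ge> 2"
  shows "in_tree (nn p K) (nn p K) (tpar p K)"
proof -
  have reach: "\<forall>i\<in>{1..nn p K}. \<exists>k. (tpar p K ^^ k) i = nn p K"
  proof
    fix i assume "i \<in> {1..nn p K}"
    then show "\<exists>k. (tpar p K ^^ k) i = nn p K"
    proof (induction "nn p K - i" arbitrary: i rule: less_induct)
      case (less i)
      show ?case
      proof (cases "i = nn p K")
        case True then show ?thesis by (intro exI[of _ 0]) simp
      next
        case False
        with tpar_gt[OF less.prems this] have g: "i < tpar p K i" "tpar p K i \<le> nn p K" by auto
        with less.prems have "tpar p K i \<in> {1..nn p K}" by auto
        with less.hyps[of "tpar p K i"] g less.prems obtain k where "(tpar p K ^^ k) (tpar p K i) = nn p K"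
          by fastforce
        then show ?thesis by (intro exI[of _ "Suc k"]) (simp add: funpow_Suc_right del: funpow.simps)
      qed
    qed
  qed
  have "nn p K \<in> {1..nn p K}" by (simp add: nn_def)
  moreover have "\<forall>i\<in>{1..nn p K}. i \<noteq> nn p K \<longrightarrow> tpar p K i \<in> {1..nn p K}"
    using tpar_gt by fastforce
  ultimately show ?thesis using reach unfolding in_tree_def by blast
qed


definition fproc :: "nat \<Rightarrow> nat \<Rightarrow> nat \<Rightarrow> nat" where
  "fproc p K i = (if i = nn p K then 0 else if (i-1) mod NN p K < K then 0 else (i-1) div NN p K + 1)"
definition fs :: "nat \<Rightarrow> nat \<Rightarrow> nat \<Rightarrow> nat" where
  "fs p K i = (if i = nn p K then (p-1)*K+1 else if (i-1) mod NN p K < K then ((i-1) div NN p K)*K + (i-1) mod NN p K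
     else if (i-1) mod NN p K < NN p K - 1 then (i-1) mod NN p K - K else (p-1)*K)"

lemma blk_ne: "b < p-1 \<Longrightarrow> a < NN p K \<Longrightarrow> b*NN p K + a + 1 \<noteq> nn p K"
proof -
  assume "b < p-1" "a < NN p K"
  hence "b*NN p K + a + 1 < (b+1)*NN p K + 1" by simp
  also have "\<dots> \<le> (p-1)*NN p K + 1" using \<open>b < p-1\<close> by (intro add_le_mono1 mult_le_mono1) simp
  finally show ?thesis unfolding nn_def by simp
qed

lemma fs_eq: "b < p-1 \<Longrightarrow> a < NN p K \<Longrightarrow> fs p K (b*NN p K + a + 1) =
   (if a < K then b*K + a else if a < NN p K - 1 then a - K else (p-1)*K)"
  using blk_ne[of b p a K] by (simp add: fs_def)

lemma fproc_eq: "b < p-1 \<Longrightarrow> a < NN p K \<Longrightarrow> fproc p K (b*NN p K + a + 1) =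
   (if a < K then 0 else b + 1)"
  using blk_ne[of b p a K] by (simp add: fproc_def)

lemma NN_m1: "NN p K - 1 = p*K" by (simp add: NN_def)

lemma leaf_lt: "(b::nat) < p-1 \<Longrightarrow> a < K \<Longrightarrow> b*K + a < (p-1)*K"
proof -
  assume "b < p-1" "a < K"
  have "(b+1)*K = b*K + K" by simp
  hence "b*K + a < (b+1)*K" using \<open>a < K\<close> by linarith
  also have "\<dots> \<le> (p-1)*K" using \<open>b < p-1\<close> by (intro mult_le_mono1) simp
  finally show ?thesis .
qed

lemma chain_lt: "(K::nat) \<le> a \<Longrightarrow> a < NN p K - 1 \<Longrightarrow> a - K < (p-1)*K"
  unfolding NN_m1 by (simp add: diff_mult_distrib less_diff_conv2)

lemma fs_le: "i \<in> {1..nn p K} \<Longrightarrow> fs p K i \<le> (p-1)*K+1"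
proof (cases "i = nn p K")
  case False
  assume i: "i \<in> {1..nn p K}"
  obtain b a where ba: "b < p-1" "a < NN p K" "i = b*NN p K + a + 1"
    using decomp[OF i False] by blast
  show ?thesis unfolding ba(3) fs_eq[OF ba(1,2)]
    using leaf_lt[OF ba(1), of a K] chain_lt[of K a p] by auto
qed (simp add: fs_def)

lemma disj_nat: "(x::nat) \<noteq> y \<Longrightarrow> {real x..<real x+1} \<inter> {real y..<real y+1} = {}"
proof -
  assume "x \<noteq> y"
  hence "x + 1 \<le> y \<or> y + 1 \<le> x" by auto
  hence "real x + 1 \<le> real y \<or> real y + 1 \<le> real x" by linarith
  thus ?thesis by auto
qed


lemma leaf_inj: "(a::nat) < K \<Longrightarrow> a' < K \<Longrightarrow> b*K + a = b'*K + a' \<Longrightarrow> b = b' \<and> a = a'"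
proof -
  assume h: "a < K" "a' < K" "b*K + a = b'*K + a'"
  have "(b*K + a) div K = b" "(b*K+a) mod K = a" using h(1) by simp_all
  moreover have "(b'*K + a') div K = b'" "(b'*K+a') mod K = a'" using h(2) by simp_all
  ultimately show ?thesis using h(3) by metis
qed

lemma fs_inj:
  assumes "p \<ge> 2" "i \<in> {1..nn p K}" "j \<in> {1..nn p K}" "i \<noteq> j" "fproc p K i = fproc p K j"
  shows "fs p K i \<noteq> fs p K j"
proof -
  have root_case: "fs p K x \<noteq> fs p K (nn p K)" if x: "x \<in> {1..nn p K}" "x \<noteq> nn p K"
     "fproc p K x = fproc p K (nn p K)" for x
  proof -
    obtain b a where ba: "b < p-1" "a < NN p K" "x = b*NN p K + a + 1"
      using decomp[OF x(1,2)] by blast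
    have "a < K" using x(3) unfolding ba(3) fproc_eq[OF ba(1,2)] by (simp add: fproc_def split: if_splits)
    thus ?thesis unfolding ba(3) fs_eq[OF ba(1,2)] using leaf_lt[OF ba(1) \<open>a < K\<close>] by (simp add: fs_def)
  qed
  show ?thesis
  proof (cases "i = nn p K \<or> j = nn p K")
    case True
    then show ?thesis using root_case[of i] root_case[of j] assms by auto
  next
    case False
    obtain b a where ba: "b < p-1" "a < NN p K" "i = b*NN p K + a + 1"
      using decomp[OF assms(2)] False by blast
    obtain b' a' where ba': "b' < p-1" "a' < NN p K" "j = b'*NN p K + a' + 1"
      using decomp[OF assms(3)] False by blast
    have pr: "(if a < K then 0 else b + 1) = (if a' < K then 0 else b' + 1)"
      using assms(5) unfolding ba(3) ba'(3) fproc_eq[OF ba(1,2)] fproc_eq[OF ba'(1,2)] .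
    show ?thesis
    proof
      assume eq: "fs p K i = fs p K j"
      hence eq': "(if a < K then b*K + a else if a < NN p K - 1 then a - K else (p-1)*K) =
         (if a' < K then b'*K + a' else if a' < NN p K - 1 then a' - K else (p-1)*K)"
        unfolding ba(3) ba'(3) fs_eq[OF ba(1,2)] fs_eq[OF ba'(1,2)] .
      have "b = b' \<and> a = a'"
      proof (cases "a < K")
        case True
        with pr have "a' < K" by (auto split: if_splits)
        with True eq' show ?thesis using leaf_inj[of a K a' b b'] by auto
      next
        case False
        with pr have a'K: "\<not> a' < K" "b = b'" by (auto split: if_splits)
        have c1: "a - K < (p-1)*K" if "a < NN p K - 1" using chain_lt[of K a p] that False by simp
        have c2: "a' - K < (p-1)*K" if "a' < NN p K - 1" using chain_lt[of K a' p] that a'K by simp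
        have "a = a'"
          using eq' False a'K c1 c2 ba(2) ba'(2) by (auto split: if_splits)
        with a'K show ?thesis by simp
      qed
      with ba(3) ba'(3) assms(4) show False by simp
    qed
  qed
qed


lemma fs_prec:
  assumes "p \<ge> 2" "i \<in> {1..nn p K}" "j \<in> children (nn p K) (nn p K) (tpar p K) i"
  shows "fs p K j + 1 \<le> fs p K i"
proof -
  have j: "j \<in> {1..nn p K}" "j \<noteq> nn p K" "tpar p K j = i" using assms(3) unfolding children_def by auto
  obtain b a where ba: "b < p-1" "a < NN p K" "i' = b*NN p K + a + 1" if "i' = j" for i'
    using decomp[OF j(1,2)] by blast
  then have jj: "j = b*NN p K + a + 1" by blast
  have ba1: "b < p-1" "a < NN p K" using ba by blast+
  have N1: "NN p K - 1 = p*K" "NN p K = p*K+1" by (simp_all add: NN_def)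
  have pK: "K \<le> p*K" using assms(1) by simp
  have L: "(p-1)*K = p*K - K" by (simp add: diff_mult_distrib)
  show ?thesis
  proof (cases "a < K")
    case True
    have "i = b*NN p K + (NN p K - 1) + 1" using j(3) unfolding jj tpar_eq[OF ba1(2)] using True by (simp add: NN_def)
    hence "fs p K i = (p-1)*K" using fs_eq[OF ba1(1), of "NN p K - 1" K] pK assms(1) by (simp add: N1)
    moreover have "fs p K j = b*K + a" unfolding jj fs_eq[OF ba1] using True by simp
    ultimately show ?thesis using leaf_lt[OF ba1(1) True] by simp
  next
    case False
    show ?thesis
    proof (cases "a < NN p K - 1")
      case True
      have a1: "a + 1 < NN p K" using True by simp
      have "i = b*NN p K + (a+1) + 1" using j(3) False True unfolding jj tpar_eq[OF ba1(2)] by simp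
      hence "fs p K i = a + 1 - K" using fs_eq[OF ba1(1) a1] False True L N1 by auto
      moreover have "fs p K j = a - K" unfolding jj fs_eq[OF ba1] using True False by simp
      ultimately show ?thesis using False by simp
    next
      case nt: False
      have "i = nn p K" using j(3) False nt unfolding jj tpar_eq[OF ba1(2)] by simp
      hence "fs p K i = (p-1)*K + 1" by (simp add: fs_def)
      moreover have "fs p K j = (p-1)*K" unfolding jj fs_eq[OF ba1] using nt False by simp
      ultimately show ?thesis by simp
    qed
  qed
qed

lemma fast_valid:
  assumes "p \<ge> 2"
  shows "valid_schedule (nn p K) (nn p K) (tpar p K) pebble_w p (fproc p K) (\<lambda>i. real (fs p K i))"
  unfolding valid_schedule_def
proof (intro conjI ballI impI)
  fix i assume i: "i \<in> {1..nn p K}"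
  show "fproc p K i < p"
  proof (cases "i = nn p K")
    case True thus ?thesis using assms by (simp add: fproc_def)
  next
    case False
    obtain b a where ba: "b < p-1" "a < NN p K" "i = b*NN p K + a + 1"
      using decomp[OF i False] by blast
    show ?thesis unfolding ba(3) fproc_eq[OF ba(1,2)] using ba(1) assms by auto
  qed
  show "0 \<le> real (fs p K i)" by simp
next
  fix i j assume ij: "i \<in> {1..nn p K}" "j \<in> {1..nn p K}" "i \<noteq> j \<and> fproc p K i = fproc p K j"
  show "{real (fs p K i)..<real (fs p K i) + pebble_w i} \<inter> {real (fs p K j)..<real (fs p K j) + pebble_w j} = {}"
    unfolding pebble_w_def using disj_nat fs_inj[OF assms ij(1,2)] ij(3) by blast
next
  fix i j assume "i \<in> {1..nn p K}" "j \<in> children (nn p K) (nn p K) (tpar p K) i"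
  from fs_prec[OF assms this] show "real (fs p K j) + pebble_w j \<le> real (fs p K i)"
    unfolding pebble_w_def by linarith
qed

lemma makespan_ge: "i \<in> {1..n} \<Longrightarrow> \<sigma> i + w i \<le> makespan n w \<sigma>"
  unfolding makespan_def by (rule Max_ge) auto

lemma makespan_le: "n \<ge> 1 \<Longrightarrow> (\<And>i. i \<in> {1..n} \<Longrightarrow> \<sigma> i + w i \<le> B) \<Longrightarrow> makespan n w \<sigma> \<le> B"
  unfolding makespan_def by (subst Max_le_iff) auto

lemma opt_ms_le:
  assumes "p \<ge> 2"
  shows "opt_makespan (nn p K) (nn p K) (tpar p K) pebble_w p \<le> real ((p-1)*K) + 2"
proof -
  let ?S = "{makespan (nn p K) pebble_w \<sigma> |proc \<sigma>. valid_schedule (nn p K) (nn p K) (tpar p K) pebble_w p proc \<sigma>}"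
  have mem: "makespan (nn p K) pebble_w (\<lambda>i. real (fs p K i)) \<in> ?S" using fast_valid[OF assms] by blast
  have bdd: "bdd_below ?S"
  proof (rule bdd_belowI[of _ 0], clarify)
    fix proc \<sigma> assume v: "valid_schedule (nn p K) (nn p K) (tpar p K) pebble_w p proc \<sigma>"
    have "1 \<in> {1..nn p K}" by (simp add: nn_def)
    hence "\<sigma> 1 + pebble_w 1 \<le> makespan (nn p K) pebble_w \<sigma>" by (rule makespan_ge)
    moreover have "0 \<le> \<sigma> 1" using v \<open>1 \<in> _\<close> unfolding valid_schedule_def by blast
    ultimately show "0 \<le> makespan (nn p K) pebble_w \<sigma>" unfolding pebble_w_def by linarith
  qed
  have "makespan (nn p K) pebble_w (\<lambda>i. real (fs p K i)) \<le> real ((p-1)*K) + 2"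
  proof (rule makespan_le)
    show "1 \<le> nn p K" by (simp add: nn_def)
    fix i assume "i \<in> {1..nn p K}"
    from fs_le[OF this] show "real (fs p K i) + pebble_w i \<le> real ((p-1)*K) + 2"
      unfolding pebble_w_def by linarith
  qed
  moreover have "opt_makespan (nn p K) (nn p K) (tpar p K) pebble_w p \<le> makespan (nn p K) pebble_w (\<lambda>i. real (fs p K i))"
    unfolding opt_makespan_def by (rule cInf_lower[OF mem bdd])
  ultimately show ?thesis by linarith
qed


lemma mem_bdd: "mem_used n r par pebble_w pebble_nx pebble_f \<sigma> t \<le> real n"
proof -
  have "card {i\<in>{1..n}. \<sigma> i \<le> t \<and> t < (if i = r then makespan n pebble_w \<sigma> else \<sigma> (par i) + 1)} \<le> card {1..n}"
    by (rule card_mono) auto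
  thus ?thesis unfolding mem_card by simp
qed

lemma peak_ge: "mem_used n r par pebble_w pebble_nx pebble_f \<sigma> t \<le> peak_memory n r par pebble_w pebble_nx pebble_f \<sigma>"
  unfolding peak_memory_def by (rule cSup_upper) (auto intro: bdd_aboveI2[OF mem_bdd])

lemma mem_nonneg: "0 \<le> mem_used n r par pebble_w pebble_nx pebble_f \<sigma> t"
  unfolding mem_card by simp

lemma KN_lt: "(p::nat) \<ge> 2 \<Longrightarrow> K < NN p K - 1 \<or> K = 0"
  by (cases "K = 0") (auto simp: NN_def)

lemma child_of: "i \<in> {1..n} \<Longrightarrow> j \<in> {1..n} \<Longrightarrow> j \<noteq> r \<Longrightarrow> par j = i \<Longrightarrow>
   valid_schedule n r par w p proc \<sigma> \<Longrightarrow> \<sigma> j + w j \<le> \<sigma> i"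
  unfolding valid_schedule_def children_def by auto

lemma in_range: "b < p-1 \<Longrightarrow> a < NN p K \<Longrightarrow> b*NN p K + a + 1 \<in> {1..nn p K}"
  using blk_ne[of b p a K]
proof -
  assume "b < p-1" "a < NN p K"
  hence "b*NN p K + a + 1 < (b+1)*NN p K + 1" by simp
  also have "\<dots> \<le> (p-1)*NN p K + 1" using \<open>b < p-1\<close> by (intro add_le_mono1 mult_le_mono1) simp
  finally show ?thesis unfolding nn_def by simp
qed

lemma opt_lower:
  assumes p2: "p \<ge> 2" and K1: "K \<ge> 1"
    and v: "valid_schedule (nn p K) (nn p K) (tpar p K) pebble_w p proc \<sigma>"
    and ms: "makespan (nn p K) pebble_w \<sigma> \<le> real ((p-1)*K) + 2"
  shows "real ((p-1)*K) \<le> peak_memory (nn p K) (nn p K) (tpar p K) pebble_w pebble_nx pebble_f \<sigma>"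
proof -
  let ?N = "NN p K" and ?n = "nn p K" and ?L = "(p-1)*K"
  have N1: "?N - 1 = p*K" "?N = p*K+1" by (simp_all add: NN_def)
  have L: "?L = p*K - K" by (simp add: diff_mult_distrib)
  have KL: "K + ?L = p*K" using p2 L by (simp add: diff_mult_distrib)
  have Lpos: "?L \<ge> 1" using p2 K1 by simp
  have chain: "\<sigma> (b*?N + K + k + 1) \<ge> real k" if b: "b < p-1" and k: "k < ?L" for b k
    using k
  proof (induction k)
    case 0
    have "b*?N + K + 0 + 1 \<in> {1..?n}" using in_range[OF b, of K K] KL Lpos N1 by (simp add: add.assoc)
    thus ?case using v unfolding valid_schedule_def by auto
  next
    case (Suc k)
    have a1: "K + k < ?N" "K + Suc k < ?N" using Suc.prems KL N1 by linarith+
    have jr: "b*?N + (K + k) + 1 \<in> {1..?n}" "b*?N + (K + Suc k) + 1 \<in> {1..?n}"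
      using in_range[OF b a1(1)] in_range[OF b a1(2)] by auto
    have tp: "tpar p K (b*?N + (K + k) + 1) = b*?N + (K + Suc k) + 1"
      unfolding tpar_eq[OF a1(1)] using Suc.prems KL N1 by auto
    have "\<sigma> (b*?N + (K + k) + 1) + pebble_w (b*?N + (K + k) + 1) \<le> \<sigma> (b*?N + (K + Suc k) + 1)"
      by (rule child_of[OF jr(2) jr(1) blk_ne[OF b a1(1)] tp v])
    with Suc.IH Suc.prems show ?case unfolding pebble_w_def by (simp add: add.assoc)
  qed
  have vlow: "\<sigma> (b*?N + (?N - 1) + 1) \<ge> real ?L" if b: "b < p-1" for b
  proof -
    have a1: "K + (?L - 1) < ?N" "?N - 1 < ?N" using KL N1 Lpos by linarith+
    have jr: "b*?N + (K + (?L - 1)) + 1 \<in> {1..?n}" "b*?N + (?N - 1) + 1 \<in> {1..?n}"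
      using in_range[OF b a1(1)] in_range[OF b a1(2)] by auto
    have tp: "tpar p K (b*?N + (K + (?L - 1)) + 1) = b*?N + (?N - 1) + 1"
      unfolding tpar_eq[OF a1(1)] using KL N1 Lpos by auto
    have "\<sigma> (b*?N + (K + (?L - 1)) + 1) + pebble_w (b*?N + (K + (?L - 1)) + 1) \<le> \<sigma> (b*?N + (?N - 1) + 1)"
      by (rule child_of[OF jr(2) jr(1) blk_ne[OF b a1(1)] tp v])
    moreover have "\<sigma> (b*?N + K + (?L - 1) + 1) \<ge> real (?L - 1)"
    proof -
      have "?L - 1 < ?L" using Lpos by linarith
      from chain[OF b this] show ?thesis .
    qed
    ultimately show ?thesis unfolding pebble_w_def using Lpos by (simp add: add.assoc of_nat_diff)
  qed
  have nr: "?n \<in> {1..?n}" by (simp add: nn_def)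
  have vhigh: "\<sigma> (b*?N + (?N - 1) + 1) \<le> real ?L" if b: "b < p-1" for b
  proof -
    have a1: "?N - 1 < ?N" by (simp add: NN_def)
    have jr: "b*?N + (?N - 1) + 1 \<in> {1..?n}" using in_range[OF b a1] .
    have tp: "tpar p K (b*?N + (?N - 1) + 1) = ?n"
      unfolding tpar_eq[OF a1] using KL N1 Lpos by auto
    have "\<sigma> (b*?N + (?N - 1) + 1) + pebble_w (b*?N + (?N - 1) + 1) \<le> \<sigma> ?n"
      by (rule child_of[OF nr jr blk_ne[OF b a1] tp v])
    moreover have "\<sigma> ?n + pebble_w ?n \<le> makespan ?n pebble_w \<sigma>" by (rule makespan_ge[OF nr])
    ultimately show ?thesis using ms unfolding pebble_w_def by linarith
  qed
  define Lv where "Lv = (\<lambda>(b,a). b*?N + a + 1) ` ({..<p-1} \<times> {..<K})"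
  have NK: "K < ?N" using N1 p2 K1 by (simp add: NN_def) (metis KL add_leE le_add1 le_imp_less_Suc)
  have inj: "inj_on (\<lambda>(b,a). b*?N + a + 1) ({..<p-1} \<times> {..<K})"
  proof (rule inj_onI, clarsimp)
    fix b a b' a' assume h: "a < K" "a' < K" "b * ?N + a = b' * ?N + a'"
    have "(b * ?N + a) div ?N = b" "(b * ?N + a) mod ?N = a" using h(1) NK by simp_all
    moreover have "(b' * ?N + a') div ?N = b'" "(b' * ?N + a') mod ?N = a'" using h(2) NK by simp_all
    ultimately show "b = b' \<and> a = a'" using h(3) by metis
  qed
  have cardLv: "card Lv = ?L" unfolding Lv_def using card_image[OF inj] by simp
  let ?A = "{i\<in>{1..?n}. \<sigma> i \<le> real ?L \<and> real ?L < (if i = ?n then makespan ?n pebble_w \<sigma> else \<sigma> (tpar p K i) + 1)}"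
  have sub: "Lv \<subseteq> ?A"
  proof
    fix x assume "x \<in> Lv"
    then obtain b a where ba: "b < p-1" "a < K" "x = b*?N + a + 1" unfolding Lv_def by auto
    have aN: "a < ?N" using ba(2) NK by simp
    have a1: "?N - 1 < ?N" by (simp add: NN_def)
    have xr: "x \<in> {1..?n}" "x \<noteq> ?n" using in_range[OF ba(1) aN] blk_ne[OF ba(1) aN] ba(3) by auto
    have tp: "tpar p K x = b*?N + (?N - 1) + 1" unfolding ba(3) tpar_eq[OF aN] using ba(2) N1 by simp
    have "\<sigma> x + pebble_w x \<le> \<sigma> (b*?N + (?N - 1) + 1)"
      by (rule child_of[OF in_range[OF ba(1) a1] xr(1) xr(2) tp v])
    with vlow[OF ba(1)] vhigh[OF ba(1)] show "x \<in> ?A" using xr tp unfolding pebble_w_def by auto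
  qed
  have "real ?L = real (card Lv)" using cardLv by simp
  also have "\<dots> \<le> real (card ?A)" using sub by (intro of_nat_mono card_mono) auto
  also have "\<dots> = mem_used ?n ?n (tpar p K) pebble_w pebble_nx pebble_f \<sigma> (real ?L)"
    unfolding mem_card by (simp add: pebble_w_def)
  also have "\<dots> \<le> peak_memory ?n ?n (tpar p K) pebble_w pebble_nx pebble_f \<sigma>" by (rule peak_ge)
  finally show ?thesis .
qed


definition ss :: "nat \<Rightarrow> real" where "ss i = real (i - 1)"

lemma seq_valid:
  assumes "p \<ge> 2"
  shows "valid_schedule (nn p K) (nn p K) (tpar p K) pebble_w p (\<lambda>_. 0) ss"
  unfolding valid_schedule_def
proof (intro conjI ballI impI)
  fix i assume "i \<in> {1..nn p K}"
  show "(0::nat) < p" using assms by simp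
  show "0 \<le> ss i" by (simp add: ss_def)
next
  fix i j assume ij: "i \<in> {1..nn p K}" "j \<in> {1..nn p K}" "i \<noteq> j \<and> (0::nat) = 0"
  hence "i - 1 \<noteq> j - 1" by auto
  thus "{ss i..<ss i + pebble_w i} \<inter> {ss j..<ss j + pebble_w j} = {}"
    unfolding pebble_w_def ss_def by (rule disj_nat)
next
  fix i j assume i: "i \<in> {1..nn p K}" and "j \<in> children (nn p K) (nn p K) (tpar p K) i"
  hence j: "j \<in> {1..nn p K}" "j \<noteq> nn p K" "tpar p K j = i" unfolding children_def by auto
  have "j < i" using tpar_gt[OF j(1,2)] j(3) by simp
  thus "ss j + pebble_w j \<le> ss i" using j(1) unfolding ss_def pebble_w_def by (simp add: of_nat_diff)
qed

lemma card2: "card {u, v} \<le> 2"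
  by (cases "u = v") auto

lemma seq_mem:
  assumes p2: "p \<ge> 2" and K1: "K \<ge> 1"
  shows "mem_used (nn p K) (nn p K) (tpar p K) pebble_w pebble_nx pebble_f ss t \<le> real K + real p + 2"
proof -
  let ?N = "NN p K" and ?n = "nn p K"
  have N1: "?N - 1 = p*K" "?N = p*K+1" by (simp_all add: NN_def)
  let ?A = "{i\<in>{1..?n}. ss i \<le> t \<and> t < (if i = ?n then makespan ?n pebble_w ss else ss (tpar p K i) + 1)}"
  define Lf where "Lf = {i \<in> ?A. i \<noteq> ?n \<and> (i-1) mod ?N < K}"
  define Ch where "Ch = {nat \<lfloor>t\<rfloor>, nat (\<lfloor>t\<rfloor>+1)}"
  define V where "V = (\<lambda>b. b*?N + (?N-1) + 1) ` {..<p-1}"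
  have sub: "?A \<subseteq> Lf \<union> Ch \<union> V \<union> {?n}"
  proof
    fix i assume iA: "i \<in> ?A"
    show "i \<in> Lf \<union> Ch \<union> V \<union> {?n}"
    proof (cases "i = ?n")
      case False
      have i1: "i \<in> {1..?n}" using iA by blast
      obtain b a where ba: "b < p-1" "a < ?N" "i = b*?N + a + 1"
        using decomp[OF i1 False] by blast
      have md: "(i-1) mod ?N = a" using ba by simp
      show ?thesis
      proof (cases "a < K")
        case True thus ?thesis using iA False md unfolding Lf_def by blast
      next
        case nK: False
        show ?thesis
        proof (cases "a < ?N - 1")
          case True
          have "tpar p K i = i + 1" unfolding ba(3) tpar_eq[OF ba(2)] using True nK by simp
          hence h: "real i - 1 \<le> t" "t < real i + 1" using iA False i1 unfolding ss_def by (auto simp: of_nat_diff)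
          have "int i - 1 \<le> \<lfloor>t\<rfloor>" unfolding le_floor_iff using h(1) by simp
          moreover have "\<lfloor>t\<rfloor> \<le> int i" using h(2) floor_less_iff[of t "int i + 1"] by simp
          ultimately have "int i = \<lfloor>t\<rfloor> \<or> int i = \<lfloor>t\<rfloor> + 1" by linarith
          hence "i \<in> Ch" unfolding Ch_def by auto
          thus ?thesis by blast
        next
          case False
          hence "a = ?N - 1" using ba(2) by simp
          hence "i \<in> V" unfolding V_def ba(3) using ba(1) by blast
          thus ?thesis by blast
        qed
      qed
    qed simp
  qed
  have fin: "finite Lf" unfolding Lf_def by simp
  have cLf: "card Lf \<le> K"
  proof (cases "Lf = {}")
    case False
    then obtain i0 where i0: "i0 \<in> Lf" by blast
    have key: "\<exists>b a. b < p-1 \<and> a < K \<and> i = b*?N + a + 1 \<and> real (b*?N) \<le> t \<and> t < real (b*?N + ?N)"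
      if "i \<in> Lf" for i
    proof -
      have iA: "i \<in> ?A" "i \<noteq> ?n" "(i-1) mod ?N < K" using that unfolding Lf_def by auto
      have i1: "i \<in> {1..?n}" using iA by blast
      obtain b a where ba: "b < p-1" "a < ?N" "i = b*?N + a + 1"
        using decomp[OF i1 iA(2)] by blast
      have aK: "a < K" using iA(3) ba by simp
      have tp: "tpar p K i = b*?N + ?N" unfolding ba(3) tpar_eq[OF ba(2)] using aK by simp
      have "ss i \<le> t" "t < ss (b*?N + ?N) + 1" using iA tp by auto
      hence "real (b*?N + a) \<le> t" "t < real (b*?N + ?N)" unfolding ss_def ba(3) N1
        by (simp_all add: of_nat_diff)
      thus ?thesis using ba aK by (intro exI[of _ b] exI[of _ a]) auto
    qed
    obtain b0 a0 where b0: "b0 < p-1" "a0 < K" "i0 = b0*?N + a0 + 1" "real (b0*?N) \<le> t" "t < real (b0*?N + ?N)"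
      using key[OF i0] by blast
    have "Lf \<subseteq> (\<lambda>a. b0*?N + a + 1) ` {..<K}"
    proof
      fix i assume "i \<in> Lf"
      then obtain b a where ba: "b < p-1" "a < K" "i = b*?N + a + 1" "real (b*?N) \<le> t" "t < real (b*?N + ?N)"
        using key by blast
      have e1: "(b0+1)*?N = b0*?N + ?N" by simp
      have "real (b*?N) < real ((b0+1)*?N)" unfolding e1 using ba(4) b0(5) by linarith
      hence "b*?N < (b0+1)*?N" by (simp only: of_nat_less_iff)
      hence "b < b0 + 1" using mult_less_cancel2 by blast
      moreover have e2: "(b+1)*?N = b*?N + ?N" by simp
      have "real (b0*?N) < real ((b+1)*?N)" unfolding e2 using b0(4) ba(5) by linarith
      hence "b0*?N < (b+1)*?N" by (simp only: of_nat_less_iff)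
      hence "b0 < b + 1" using mult_less_cancel2 by blast
      ultimately have "b = b0" by simp
      thus "i \<in> (\<lambda>a. b0*?N + a + 1) ` {..<K}" using ba by auto
    qed
    hence "card Lf \<le> card ((\<lambda>a. b0*?N + a + 1) ` {..<K})" by (rule card_mono[rotated]) simp
    also have "\<dots> \<le> card {..<K}" by (rule card_image_le) simp
    finally show ?thesis by simp
  qed simp
  have cV: "card V \<le> p - 1" unfolding V_def using card_image_le[of "{..<p-1}"] by simp
  have cCh: "card Ch \<le> 2" unfolding Ch_def by (rule card2)
  have "card ?A \<le> card (Lf \<union> Ch \<union> V \<union> {?n})" by (rule card_mono[OF _ sub]) (simp add: fin Ch_def V_def)
  also have "\<dots> \<le> card (Lf \<union> Ch \<union> V) + card {?n}" by (rule card_Un_le)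
  also have "\<dots> \<le> card (Lf \<union> Ch) + card V + 1" using card_Un_le[of "Lf \<union> Ch" V] by simp
  also have "\<dots> \<le> card Lf + card Ch + card V + 1" using card_Un_le[of Lf Ch] by simp
  finally have "card ?A \<le> K + p + 2" using cLf cV cCh p2 by arith
  hence "real (card ?A) \<le> real K + real p + 2" by linarith
  thus ?thesis unfolding mem_card .
qed


lemma opt_peak_bounds:
  assumes p2: "p \<ge> 2" and K1: "K \<ge> 1"
  shows "opt_peak (nn p K) (nn p K) (tpar p K) pebble_w pebble_nx pebble_f p \<le> real K + real p + 2"
    "0 \<le> opt_peak (nn p K) (nn p K) (tpar p K) pebble_w pebble_nx pebble_f p"
proof -
  let ?S = "{peak_memory (nn p K) (nn p K) (tpar p K) pebble_w pebble_nx pebble_f \<sigma> |proc \<sigma>.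
              valid_schedule (nn p K) (nn p K) (tpar p K) pebble_w p proc \<sigma>}"
  have mem: "peak_memory (nn p K) (nn p K) (tpar p K) pebble_w pebble_nx pebble_f ss \<in> ?S"
    using seq_valid[OF p2] by blast
  have nonneg: "\<forall>x\<in>?S. 0 \<le> x"
  proof clarify
    fix proc \<sigma>
    show "0 \<le> peak_memory (nn p K) (nn p K) (tpar p K) pebble_w pebble_nx pebble_f \<sigma>"
      using mem_nonneg peak_ge order_trans by blast
  qed
  have bdd: "bdd_below ?S" using nonneg by (intro bdd_belowI[of _ 0]) blast
  have "peak_memory (nn p K) (nn p K) (tpar p K) pebble_w pebble_nx pebble_f ss \<le> real K + real p + 2"
    unfolding peak_memory_def by (rule cSup_least) (auto intro: seq_mem[OF p2 K1])
  moreover have "opt_peak (nn p K) (nn p K) (tpar p K) pebble_w pebble_nx pebble_f p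
     \<le> peak_memory (nn p K) (nn p K) (tpar p K) pebble_w pebble_nx pebble_f ss"
    unfolding opt_peak_def by (rule cInf_lower[OF mem bdd])
  ultimately show "opt_peak (nn p K) (nn p K) (tpar p K) pebble_w pebble_nx pebble_f p \<le> real K + real p + 2"
    by linarith
  show "0 \<le> opt_peak (nn p K) (nn p K) (tpar p K) pebble_w pebble_nx pebble_f p"
    unfolding opt_peak_def by (rule cInf_greatest) (use mem nonneg in blast)+
qed

theorem theorem4:
  fixes p :: nat and \<epsilon> :: real
  assumes "p \<ge> 2" and "\<epsilon> > 0"
  shows "\<exists>n r par. in_tree n r par \<and>
    (\<forall>proc \<sigma>. valid_schedule n r par pebble_w p proc \<sigma>
        \<and> makespan n pebble_w \<sigma> = opt_makespan n r par pebble_w p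
      \<longrightarrow> peak_memory n r par pebble_w pebble_nx pebble_f \<sigma>
          > (real p - 1 - \<epsilon>) * opt_peak n r par pebble_w pebble_nx pebble_f p)"
proof -
  define K where "K = nat \<lceil>(real p - 1) * (real p + 2) / \<epsilon>\<rceil> + 1"
  have K1: "K \<ge> 1" unfolding K_def by simp
  have "real K > (real p - 1) * (real p + 2) / \<epsilon>" unfolding K_def by linarith
  hence eK: "\<epsilon> * real K > (real p - 1) * (real p + 2)" using assms(2) by (simp add: field_simps)
  have p1: "real p \<ge> 2" using assms(1) by simp
  show ?thesis
  proof (intro exI conjI allI impI)
    show "in_tree (nn p K) (nn p K) (tpar p K)" by (rule tree_ok[OF assms(1)])
    fix proc \<sigma>
    assume h: "valid_schedule (nn p K) (nn p K) (tpar p K) pebble_w p proc \<sigma> \<and>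
      makespan (nn p K) pebble_w \<sigma> = opt_makespan (nn p K) (nn p K) (tpar p K) pebble_w p"
    have ms: "makespan (nn p K) pebble_w \<sigma> \<le> real ((p-1)*K) + 2" using h opt_ms_le[OF assms(1)] by simp
    have lo: "real ((p-1)*K) \<le> peak_memory (nn p K) (nn p K) (tpar p K) pebble_w pebble_nx pebble_f \<sigma>"
      using opt_lower[OF assms(1) K1 _ ms] h by blast
    have Lr: "real ((p-1)*K) = (real p - 1) * real K" using assms(1) by (simp add: of_nat_diff)
    define Opk where "Opk = opt_peak (nn p K) (nn p K) (tpar p K) pebble_w pebble_nx pebble_f p"
    have Opk: "Opk \<le> real K + real p + 2" "0 \<le> Opk" using opt_peak_bounds[OF assms(1) K1] unfolding Opk_def by auto
    have "(real p - 1 - \<epsilon>) * Opk < (real p - 1) * real K"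
    proof (cases "real p - 1 - \<epsilon> \<le> 0")
      case True
      hence "(real p - 1 - \<epsilon>) * Opk \<le> 0" using Opk(2) by (simp add: mult_nonpos_nonneg)
      moreover have "(real p - 1) * real K > 0" using p1 K1 by simp
      ultimately show ?thesis by linarith
    next
      case False
      hence "(real p - 1 - \<epsilon>) * Opk \<le> (real p - 1 - \<epsilon>) * (real K + real p + 2)"
        using Opk(1) by (intro mult_left_mono) auto
      also have "\<dots> = (real p - 1) * real K - \<epsilon> * real K + (real p - 1) * (real p + 2) - \<epsilon> * (real p + 2)"
        by (simp add: algebra_simps)
      also have "\<dots> < (real p - 1) * real K" using eK assms(2) p1 by (smt (verit) mult_pos_pos)
      finally show ?thesis .
    qed
    thus "(real p - 1 - \<epsilon>) * opt_peak (nn p K) (nn p K) (tpar p K) pebble_w pebble_nx pebble_f p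
        < peak_memory (nn p K) (nn p K) (tpar p K) pebble_w pebble_nx pebble_f \<sigma>"
      using lo Lr unfolding Opk_def by linarith
  qed
qed

end
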